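(* Let $R$ be an integer with $1\le R\le\frac{\log n}{24\log\log n}$, $L=6R$, $\eta=n^{1/(2L)}$. Let $\mu_1,\ldots,\mu_n$ be i.i.d. with distribution $\pi$, let $\mu_*=\frac12+\sum_{\ell=1}^L\eta^{-\ell}$, and let $\mathcal{E}_0$ be the event that there is a unique $i^*\in[n]$ with $\mu_{i^*}=\mu_*$. Define $H=\sum_{i\in[n],\,i\neq i^*}(\mu_*-\mu_i)^{-2}$ on $\mathcal{E}_0$. Then $\mathbb{E}[H\mid\mathcal{E}_0]\le\eta^{2+2L}L$.
   Context: $\pi$ is the distribution of the random variable $\mu=\frac12+\sum_{\ell=1}^L X_\ell\eta^{-\ell}$, where $X_1,\ldots,X_L$ are independent Bernoulli random variables each with mean $\eta^{-2}$. *)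

theory Defs
  imports "HOL-Probability.Probability"
begin

definition pi_dist :: "real \<Rightarrow> nat \<Rightarrow> real pmf" where
  "pi_dist \<eta> L = map_pmf (\<lambda>X. 1/2 + (\<Sum>l=1..L. (if X l then 1 else 0) * \<eta> powi (- int l)))
     (Pi_pmf {1..L} False (\<lambda>_. bernoulli_pmf (\<eta> powi (-2))))"

text \<open>Joint law of mu_1,...,mu_n i.i.d. with law pi (indices 0..n-1; value 0 outside).\<close>
definition mus_dist :: "nat \<Rightarrow> real \<Rightarrow> nat \<Rightarrow> (nat \<Rightarrow> real) pmf" where
  "mus_dist n \<eta> L = Pi_pmf {..<n} 0 (\<lambda>_. pi_dist \<eta> L)"

definition mu_star :: "real \<Rightarrow> nat \<Rightarrow> real" where
  "mu_star \<eta> L = 1/2 + (\<Sum>l=1..L. \<eta> powi (- int l))"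

definition E0 :: "nat \<Rightarrow> real \<Rightarrow> nat \<Rightarrow> (nat \<Rightarrow> real) set" where
  "E0 n \<eta> L = {\<mu>. \<exists>!i. i < n \<and> \<mu> i = mu_star \<eta> L}"

text \<open>H = sum over i ~= i* of (mu_* - mu_i)^(-2) (meaningful on E_0).\<close>
definition H :: "nat \<Rightarrow> real \<Rightarrow> nat \<Rightarrow> (nat \<Rightarrow> real) \<Rightarrow> real" where
  "H n \<eta> L \<mu> = (let istar = (THE i. i < n \<and> \<mu> i = mu_star \<eta> L) in
      (\<Sum>i\<in>{..<n} - {istar}. 1 / (mu_star \<eta> L - \<mu> i)^2))"

end

theory Submission
  imports Defs
begin


lemma cond_exp:
  fixes p :: "'a pmf" and f :: "'a \<Rightarrow> real"
  assumes fin: "finite (set_pmf p)" and pos: "measure_pmf.prob p s > 0"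
  shows "measure_pmf.expectation (cond_pmf p s) f
         = measure_pmf.expectation p (\<lambda>x. indicator s x * f x) / measure_pmf.prob p s"
proof -
  have ne: "set_pmf p \<inter> s \<noteq> {}"
  proof
    assume "set_pmf p \<inter> s = {}"
    then have "measure_pmf.prob p s = 0" by (simp only: measure_pmf_zero_iff)
    with pos show False by simp
  qed
  have "measure_pmf.expectation (cond_pmf p s) f = (\<Sum>a\<in>set_pmf p. f a * pmf (cond_pmf p s) a)"
    by (rule integral_measure_pmf_real[OF fin]) (simp add: set_cond_pmf[OF ne])
  also have "\<dots> = (\<Sum>a\<in>set_pmf p. indicator s a * f a * pmf p a / measure_pmf.prob p s)"
    by (intro sum.cong refl) (simp add: pmf_cond[OF ne] indicator_def)
  also have "\<dots> = (\<Sum>a\<in>set_pmf p. indicator s a * f a * pmf p a) / measure_pmf.prob p s"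
    by (rule sum_divide_distrib[symmetric])
  also have "(\<Sum>a\<in>set_pmf p. indicator s a * f a * pmf p a) = measure_pmf.expectation p (\<lambda>x. indicator s x * f x)"
    by (rule integral_measure_pmf_real[OF fin, symmetric]) (simp add: set_pmf_iff)
  finally show ?thesis .
qed



lemma prod_01:
  fixes P :: "'b \<Rightarrow> bool"
  assumes "finite A"
  shows "(\<Prod>k\<in>A. (if P k then 1 else 0::real)) = (if \<forall>k\<in>A. P k then 1 else 0)"
  using assms by (induction A rule: finite_induct) auto

lemma prod_two_special:
  fixes a b c :: real
  assumes "i < n" "j < n" "i \<noteq> j"
  shows "(\<Prod>k\<in>{..<n}. (if k = i then a else if k = j then b else c)) = a * b * c ^ (n - 2)"
proof -
  have "(\<Prod>k\<in>{..<n}. (if k = i then a else if k = j then b else c))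
      = a * (\<Prod>k\<in>{..<n} - {i}. (if k = i then a else if k = j then b else c))"
    using assms by (subst prod.remove[of _ i]) auto
  also have "(\<Prod>k\<in>{..<n} - {i}. (if k = i then a else if k = j then b else c))
      = b * (\<Prod>k\<in>{..<n} - {i} - {j}. (if k = i then a else if k = j then b else c))"
    using assms by (subst prod.remove[of _ j]) auto
  also have "(\<Prod>k\<in>{..<n} - {i} - {j}. (if k = i then a else if k = j then b else c))
      = (\<Prod>k\<in>{..<n} - {i} - {j}. c)" by (intro prod.cong) auto
  also have "\<dots> = c ^ (n - 2)" using assms by (simp add: numeral_2_eq_2)
  finally show ?thesis by simp
qed

lemma prod_one_special:
  fixes a c :: real
  assumes "i < n"
  shows "(\<Prod>k\<in>{..<n}. (if k = i then a else c)) = a * c ^ (n - 1)"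
proof -
  have "(\<Prod>k\<in>{..<n}. (if k = i then a else c))
      = a * (\<Prod>k\<in>{..<n} - {i}. (if k = i then a else c))"
    using assms by (subst prod.remove[of _ i]) auto
  also have "(\<Prod>k\<in>{..<n} - {i}. (if k = i then a else c)) = (\<Prod>k\<in>{..<n} - {i}. c)"
    by (intro prod.cong) auto
  also have "\<dots> = c ^ (n - 1)" using assms by simp
  finally show ?thesis by simp
qed

lemma generic:
  fixes \<pi> :: "real pmf" and m :: real and n :: nat
  defines "P \<equiv> Pi_pmf {..<n} 0 (\<lambda>_. \<pi>)"
  defines "Ev \<equiv> {\<mu>. \<exists>!i. i < n \<and> \<mu> i = m}"
  defines "Q \<equiv> measure_pmf.expectation \<pi> (\<lambda>x. if x = m then 1 else 0)"
  defines "e \<equiv> measure_pmf.expectation \<pi> (\<lambda>x. if x = m then 0 else 1 / (m - x)^2)"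
  assumes fin: "finite (set_pmf \<pi>)" and Q0: "0 < Q" and Q1: "Q < 1" and n2: "n \<ge> 2"
  shows "measure_pmf.expectation (cond_pmf P Ev)
           (\<lambda>\<mu>. let istar = (THE i. i < n \<and> \<mu> i = m) in
              (\<Sum>i\<in>{..<n} - {istar}. 1 / (m - \<mu> i)^2)) = (real n - 1) * e / (1 - Q)"
proof -
  define ieq where "ieq = (\<lambda>x::real. if x = m then 1 else (0::real))"
  define ine where "ine = (\<lambda>x::real. if x = m then 0 else (1::real))"
  define fne where "fne = (\<lambda>x::real. if x = m then 0 else 1 / (m - x)^2)"
  define Hf where "Hf = (\<lambda>\<mu>::nat\<Rightarrow>real. let istar = (THE i. i < n \<and> \<mu> i = m) in
              (\<Sum>i\<in>{..<n} - {istar}. 1 / (m - \<mu> i)^2))"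
  define U where "U = (\<lambda>(\<mu>::nat\<Rightarrow>real) i. \<mu> i = m \<and> (\<forall>k<n. k \<noteq> i \<longrightarrow> \<mu> k \<noteq> m))"
  have int\<pi>: "integrable (measure_pmf \<pi>) g" for g :: "real \<Rightarrow> real"
    using fin by (rule integrable_measure_pmf_finite)
  have finP: "finite (set_pmf P)"
    unfolding P_def using fin by (subst set_Pi_pmf) auto
  have intP: "integrable (measure_pmf P) g" for g :: "(nat \<Rightarrow> real) \<Rightarrow> real"
    using finP by (rule integrable_measure_pmf_finite)
  have Eine: "measure_pmf.expectation \<pi> ine = 1 - Q"
  proof -
    have "measure_pmf.expectation \<pi> ine = measure_pmf.expectation \<pi> (\<lambda>x. 1 - ieq x)"
      unfolding ine_def ieq_def by (intro Bochner_Integration.integral_cong) auto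
    also have "\<dots> = measure_pmf.expectation \<pi> (\<lambda>x. 1) - measure_pmf.expectation \<pi> ieq"
      by (rule Bochner_Integration.integral_diff) (auto intro: int\<pi>)
    finally show ?thesis by (simp add: Q_def ieq_def)
  qed
  have Ev_U: "\<mu> \<in> Ev \<longleftrightarrow> (\<exists>i<n. U \<mu> i)" for \<mu>
    unfolding Ev_def U_def by auto
  have U_uniq: "U \<mu> i \<Longrightarrow> U \<mu> i' \<Longrightarrow> i < n \<Longrightarrow> i' < n \<Longrightarrow> i = i'" for \<mu> i i'
    unfolding U_def by auto
  have ptA: "indicator Ev \<mu> = (\<Sum>i<n. \<Prod>k<n. (if k = i then ieq (\<mu> k) else ine (\<mu> k)))" for \<mu>
  proof -
    have "(\<Prod>k<n. (if k = i then ieq (\<mu> k) else ine (\<mu> k))) = (if U \<mu> i then 1 else 0)" if "i < n" for i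
    proof -
      have "(\<Prod>k<n. (if k = i then ieq (\<mu> k) else ine (\<mu> k)))
          = (\<Prod>k<n. (if (if k = i then \<mu> k = m else \<mu> k \<noteq> m) then 1 else 0::real))"
        by (intro prod.cong) (auto simp: ieq_def ine_def)
      also have "\<dots> = (if U \<mu> i then 1 else 0)"
        using that by (subst prod_01) (auto simp: U_def)
      finally show ?thesis .
    qed
    then have "(\<Sum>i<n. \<Prod>k<n. (if k = i then ieq (\<mu> k) else ine (\<mu> k))) = (\<Sum>i<n. (if U \<mu> i then 1 else 0))"
      by (intro sum.cong) auto
    also have "\<dots> = indicator Ev \<mu>"
    proof (cases "\<exists>i<n. U \<mu> i")
      case True
      then obtain i0 where i0: "i0 < n" "U \<mu> i0" by blast
      have "(\<Sum>i<n. (if U \<mu> i then 1 else 0::real)) = (\<Sum>i<n. (if i = i0 then 1 else 0))"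
        using U_uniq i0 by (intro sum.cong) auto
      also have "\<dots> = 1" using i0 by simp
      finally show ?thesis using True Ev_U by (simp add: indicator_def)
    next
      case False
      then show ?thesis using Ev_U by (simp add: indicator_def)
    qed
    finally show ?thesis by simp
  qed
  have ptB: "indicator Ev \<mu> * Hf \<mu> = (\<Sum>i<n. \<Sum>j\<in>{..<n} - {i}.
      \<Prod>k<n. (if k = i then ieq (\<mu> k) else if k = j then fne (\<mu> k) else ine (\<mu> k)))" for \<mu>
  proof -
    have pr: "(\<Prod>k<n. (if k = i then ieq (\<mu> k) else if k = j then fne (\<mu> k) else ine (\<mu> k)))
        = (if U \<mu> i then fne (\<mu> j) else 0)" if ij: "i < n" "j < n" "j \<noteq> i" for i j
    proof (cases "U \<mu> i")
      case True
      have "(\<Prod>k<n. (if k = i then ieq (\<mu> k) else if k = j then fne (\<mu> k) else ine (\<mu> k)))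
          = (\<Prod>k<n. (if k = i then 1 else if k = j then fne (\<mu> j) else 1))"
        using True ij by (intro prod.cong) (auto simp: U_def ieq_def ine_def)
      also have "\<dots> = fne (\<mu> j)" using ij by (subst prod_two_special) auto
      finally show ?thesis using True by simp
    next
      case False
      then have "\<exists>k\<in>{..<n}. (if k = i then ieq (\<mu> k) else if k = j then fne (\<mu> k) else ine (\<mu> k)) = 0"
      proof (cases "\<mu> i = m")
        case True
        with False obtain k where k: "k < n" "k \<noteq> i" "\<mu> k = m" unfolding U_def by auto
        then show ?thesis by (intro bexI[of _ k]) (auto simp: fne_def ine_def)
      next
        case False
        then show ?thesis using ij by (intro bexI[of _ i]) (auto simp: ieq_def)
      qed
      then have "(\<Prod>k<n. (if k = i then ieq (\<mu> k) else if k = j then fne (\<mu> k) else ine (\<mu> k))) = 0"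
        by (intro prod_zero) auto
      then show ?thesis using False by simp
    qed
    have "(\<Sum>i<n. \<Sum>j\<in>{..<n} - {i}.
      \<Prod>k<n. (if k = i then ieq (\<mu> k) else if k = j then fne (\<mu> k) else ine (\<mu> k)))
      = (\<Sum>i<n. \<Sum>j\<in>{..<n} - {i}. (if U \<mu> i then fne (\<mu> j) else 0))"
      using pr by (intro sum.cong) auto
    also have "\<dots> = indicator Ev \<mu> * Hf \<mu>"
    proof (cases "\<exists>i<n. U \<mu> i")
      case True
      then obtain i0 where i0: "i0 < n" "U \<mu> i0" by blast
      have "(\<Sum>i<n. \<Sum>j\<in>{..<n} - {i}. (if U \<mu> i then fne (\<mu> j) else 0))
          = (\<Sum>i<n. (if i = i0 then (\<Sum>j\<in>{..<n} - {i0}. fne (\<mu> j)) else 0))"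
      proof (intro sum.cong refl)
        fix i assume "i \<in> {..<n}"
        then show "(\<Sum>j\<in>{..<n} - {i}. (if U \<mu> i then fne (\<mu> j) else 0)) =
          (if i = i0 then (\<Sum>j\<in>{..<n} - {i0}. fne (\<mu> j)) else 0)"
          using U_uniq[of \<mu> i i0] i0 by (cases "i = i0"; cases "U \<mu> i") auto
      qed
      also have "\<dots> = (\<Sum>j\<in>{..<n} - {i0}. fne (\<mu> j))" using i0 by simp
      also have "\<dots> = (\<Sum>j\<in>{..<n} - {i0}. 1 / (m - \<mu> j)^2)"
        using i0 by (intro sum.cong) (auto simp: fne_def U_def)
      also have "(THE i. i < n \<and> \<mu> i = m) = i0"
        using i0 by (intro the_equality) (auto simp: U_def)
      hence "(\<Sum>j\<in>{..<n} - {i0}. 1 / (m - \<mu> j)^2) = Hf \<mu>"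
        by (simp add: Hf_def)
      finally show ?thesis using True Ev_U by (simp add: indicator_def)
    next
      case False
      then show ?thesis using Ev_U by (simp add: indicator_def)
    qed
    finally show ?thesis by simp
  qed
  have EA: "measure_pmf.expectation P (indicator Ev) = real n * Q * (1 - Q) ^ (n - 1)"
  proof -
    have "measure_pmf.expectation P (indicator Ev) = measure_pmf.expectation P
        (\<lambda>\<mu>. \<Sum>i<n. \<Prod>k<n. (if k = i then ieq (\<mu> k) else ine (\<mu> k)))"
      by (intro Bochner_Integration.integral_cong refl) (rule ptA)
    also have "\<dots> = (\<Sum>i<n. measure_pmf.expectation P
        (\<lambda>\<mu>. \<Prod>k<n. (if k = i then ieq (\<mu> k) else ine (\<mu> k))))"
      by (rule Bochner_Integration.integral_sum) (rule intP)
    also have "\<dots> = (\<Sum>i<n. Q * (1 - Q) ^ (n - 1))"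
    proof (intro sum.cong refl)
      fix i assume i: "i \<in> {..<n}"
      have "measure_pmf.expectation P (\<lambda>\<mu>. \<Prod>k<n. (\<lambda>k v. if k = i then ieq v else ine v) k (\<mu> k))
          = (\<Prod>k<n. measure_pmf.expectation \<pi> (\<lambda>v. if k = i then ieq v else ine v))"
        unfolding P_def by (rule expectation_prod_Pi_pmf) (auto intro: int\<pi> simp: ieq_def ine_def)
      also have "\<dots> = (\<Prod>k<n. if k = i then Q else 1 - Q)"
        by (intro prod.cong refl) (auto simp: Eine Q_def ieq_def)
      also have "\<dots> = Q * (1 - Q) ^ (n - 1)" using i by (subst prod_one_special) auto
      finally show "measure_pmf.expectation P (\<lambda>\<mu>. \<Prod>k<n. (if k = i then ieq (\<mu> k) else ine (\<mu> k)))
          = Q * (1 - Q) ^ (n - 1)" by simp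
    qed
    finally show ?thesis by simp
  qed
  have EB: "measure_pmf.expectation P (\<lambda>\<mu>. indicator Ev \<mu> * Hf \<mu>)
      = real n * (real n - 1) * (Q * e * (1 - Q) ^ (n - 2))"
  proof -
    have "measure_pmf.expectation P (\<lambda>\<mu>. indicator Ev \<mu> * Hf \<mu>) = measure_pmf.expectation P
        (\<lambda>\<mu>. \<Sum>i<n. \<Sum>j\<in>{..<n} - {i}.
      \<Prod>k<n. (if k = i then ieq (\<mu> k) else if k = j then fne (\<mu> k) else ine (\<mu> k)))"
      by (intro Bochner_Integration.integral_cong refl) (rule ptB)
    also have "\<dots> = (\<Sum>i<n. measure_pmf.expectation P (\<lambda>\<mu>. \<Sum>j\<in>{..<n} - {i}.
      \<Prod>k<n. (if k = i then ieq (\<mu> k) else if k = j then fne (\<mu> k) else ine (\<mu> k))))"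
      by (rule Bochner_Integration.integral_sum) (rule intP)
    also have "\<dots> = (\<Sum>i<n. \<Sum>j\<in>{..<n} - {i}. measure_pmf.expectation P (\<lambda>\<mu>. 
      \<Prod>k<n. (if k = i then ieq (\<mu> k) else if k = j then fne (\<mu> k) else ine (\<mu> k))))"
      by (intro sum.cong refl Bochner_Integration.integral_sum intP)
    also have "\<dots> = (\<Sum>i<n. \<Sum>j\<in>{..<n} - {i}. Q * e * (1 - Q) ^ (n - 2))"
    proof (intro sum.cong refl)
      fix i j assume i: "i \<in> {..<n}" and j: "j \<in> {..<n} - {i}"
      have "measure_pmf.expectation P (\<lambda>\<mu>. \<Prod>k<n. (\<lambda>k v. if k = i then ieq v else if k = j then fne v else ine v) k (\<mu> k))
          = (\<Prod>k<n. measure_pmf.expectation \<pi> (\<lambda>v. if k = i then ieq v else if k = j then fne v else ine v))"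
        unfolding P_def by (rule expectation_prod_Pi_pmf) (auto intro: int\<pi> simp: ieq_def ine_def fne_def)
      also have "\<dots> = (\<Prod>k<n. if k = i then Q else if k = j then e else 1 - Q)"
        by (intro prod.cong refl) (auto simp: Eine Q_def ieq_def e_def fne_def)
      also have "\<dots> = Q * e * (1 - Q) ^ (n - 2)" using i j by (subst prod_two_special) auto
      finally show "measure_pmf.expectation P (\<lambda>\<mu>. \<Prod>k<n. (if k = i then ieq (\<mu> k) else if k = j then fne (\<mu> k) else ine (\<mu> k)))
          = Q * e * (1 - Q) ^ (n - 2)" by simp
    qed
    also have "\<dots> = real n * (real n - 1) * (Q * e * (1 - Q) ^ (n - 2))"
      using n2 by (simp add: of_nat_diff)
    finally show ?thesis .
  qed
  have probEv: "measure_pmf.prob P Ev = real n * Q * (1 - Q) ^ (n - 1)"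
    using EA by simp
  have pos: "measure_pmf.prob P Ev > 0" unfolding probEv using Q0 Q1 n2 by simp
  have "measure_pmf.expectation (cond_pmf P Ev) Hf = 
     real n * (real n - 1) * (Q * e * (1 - Q) ^ (n - 2)) / (real n * Q * (1 - Q) ^ (n - 1))"
    using cond_exp[OF finP pos, of Hf] EB probEv by simp
  also have "(1 - Q) ^ (n - 1) = (1 - Q) ^ (n - 2) * (1 - Q)"
  proof -
    have "n - 1 = Suc (n - 2)" using n2 by arith
    then show ?thesis by (simp only: power_Suc2)
  qed
  also have "real n * (real n - 1) * (Q * e * (1 - Q) ^ (n - 2)) / (real n * Q * ((1 - Q) ^ (n - 2) * (1 - Q)))
      = (real n - 1) * e / (1 - Q)"
    using n2 Q0 Q1 by (simp add: field_simps)
  finally show ?thesis unfolding Hf_def .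
qed



lemma powi_neg: "(\<eta>::real) powi (- int l) = 1 / \<eta> ^ l"
  by (simp add: power_int_minus divide_inverse)

lemma pi_facts:
  fixes \<eta> :: real and L :: nat
  assumes eta: "\<eta> > 1" and L1: "L \<ge> 1"
  defines "ms \<equiv> mu_star \<eta> L"
  shows "finite (set_pmf (pi_dist \<eta> L))"
    and "measure_pmf.expectation (pi_dist \<eta> L) (\<lambda>x. if x = ms then 1 else 0) = (1 / \<eta>^2) ^ L"
    and "measure_pmf.expectation (pi_dist \<eta> L) (\<lambda>x. if x = ms then 0 else 1 / (ms - x)^2) \<le> real L * \<eta>^2"
proof -
  define p where "p = 1 / \<eta>^2"
  have pp: "\<eta> powi (-2) = p" unfolding p_def using powi_neg[of \<eta> 2] by simp
  have p0: "0 < p" and p1: "p < 1" unfolding p_def using eta by (auto simp: field_simps)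
  define B where "B = Pi_pmf {1..L} False (\<lambda>_. bernoulli_pmf p)"
  define g where "g = (\<lambda>X. 1/2 + (\<Sum>l=1..L. (if X l then 1 else 0) * \<eta> powi (- int l)))"
  have pi_eq: "pi_dist \<eta> L = map_pmf g B" unfolding pi_dist_def B_def g_def pp ..
  have finB: "finite (set_pmf B)" unfolding B_def by (subst set_Pi_pmf) auto
  have intB: "integrable (measure_pmf B) h" for h :: "(nat \<Rightarrow> bool) \<Rightarrow> real"
    using finB by (rule integrable_measure_pmf_finite)
  show "finite (set_pmf (pi_dist \<eta> L))" unfolding pi_eq using finB by simp
  have diff: "ms - g X = (\<Sum>l=1..L. (if X l then 0 else 1 / \<eta>^l))" for X
  proof -
    have "ms - g X = (\<Sum>l=1..L. \<eta> powi (- int l)) - (\<Sum>l=1..L. (if X l then 1 else 0) * \<eta> powi (- int l))"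
      unfolding ms_def mu_star_def g_def by simp
    also have "\<dots> = (\<Sum>l=1..L. \<eta> powi (- int l) - (if X l then 1 else 0) * \<eta> powi (- int l))"
      by (simp add: sum_subtractf)
    also have "\<dots> = (\<Sum>l=1..L. (if X l then 0 else 1 / \<eta>^l))"
      by (intro sum.cong refl) (simp add: powi_neg)
    finally show ?thesis .
  qed
  have eqiff: "g X = ms \<longleftrightarrow> (\<forall>l\<in>{1..L}. X l)" for X
  proof -
    have "g X = ms \<longleftrightarrow> (\<Sum>l=1..L. (if X l then 0 else 1 / \<eta>^l)) = 0"
      using diff[of X] by linarith
    also have "\<dots> \<longleftrightarrow> (\<forall>l\<in>{1..L}. (if X l then 0 else 1 / \<eta>^l) = (0::real))"
      using eta by (intro sum_nonneg_eq_0_iff) auto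
    also have "\<dots> \<longleftrightarrow> (\<forall>l\<in>{1..L}. X l)" using eta by auto
    finally show ?thesis .
  qed
  show "measure_pmf.expectation (pi_dist \<eta> L) (\<lambda>x. if x = ms then 1 else 0) = (1 / \<eta>^2) ^ L"
  proof -
    have "measure_pmf.expectation (pi_dist \<eta> L) (\<lambda>x. if x = ms then 1 else 0)
        = measure_pmf.expectation B (\<lambda>X. \<Prod>l\<in>{1..L}. (\<lambda>l b. if b then 1 else 0::real) l (X l))"
      unfolding pi_eq by (simp add: eqiff prod_01)
    also have "\<dots> = (\<Prod>l\<in>{1..L}. measure_pmf.expectation (bernoulli_pmf p) (\<lambda>b. if b then 1 else 0::real))"
      unfolding B_def by (rule expectation_prod_Pi_pmf) (auto intro: integrable_measure_pmf_finite)
    also have "\<dots> = p ^ L" using p0 p1 by simp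
    finally show ?thesis by (simp add: p_def)
  qed
  define h where "h = (\<lambda>(l0::nat) (l::nat) b. if l < l0 then (if b then 1 else 0) else if l = l0 then (if b then 0 else 1) else (1::real))"
  have pw: "(if g X = ms then 0 else 1 / (ms - g X)^2) \<le> (\<Sum>l0=1..L. \<eta>^(2*l0) * (\<Prod>l\<in>{1..L}. h l0 l (X l)))" for X
  proof (cases "\<forall>l\<in>{1..L}. X l")
    case True
    have hnn: "0 \<le> h a b c" for a b c by (simp add: h_def)
    show ?thesis using eta True by (auto simp: eqiff intro!: sum_nonneg mult_nonneg_nonneg prod_nonneg hnn)
  next
    case False
    define l0 where "l0 = (LEAST l. l \<in> {1..L} \<and> \<not> X l)"
    have ex: "\<exists>l. l \<in> {1..L} \<and> \<not> X l" using False by auto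
    have l0: "l0 \<in> {1..L}" "\<not> X l0" using LeastI_ex[OF ex] unfolding l0_def by auto
    have bef: "X l" if "1 \<le> l" "l < l0" for l
      using not_less_Least[of l "\<lambda>l. l \<in> {1..L} \<and> \<not> X l"] that l0 unfolding l0_def[symmetric] by auto
    have prod1: "(\<Prod>l\<in>{1..L}. h l0 l (X l)) = 1"
      using bef l0 by (intro prod.neutral) (auto simp: h_def)
    have "(\<lambda>l. (if X l then 0 else 1 / \<eta>^l)) l0 \<le> (\<Sum>l=1..L. (if X l then 0 else 1 / \<eta>^l))"
      using l0 eta by (intro member_le_sum) auto
    hence "1 / \<eta>^l0 \<le> ms - g X" unfolding diff using l0 by simp
    moreover have "0 < 1 / \<eta>^l0" using eta by simp
    ultimately have a1: "(1 / \<eta>^l0)^2 \<le> (ms - g X)^2"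
      by (intro power_mono) auto
    have a2: "0 < (1 / \<eta>^l0)^2" by (rule zero_less_power) (use eta in simp)
    have "1 / (ms - g X)^2 \<le> 1 / (1 / \<eta>^l0)^2"
      by (rule divide_left_mono[OF a1]) (use a1 a2 in \<open>auto intro!: mult_pos_pos\<close>)
    also have "\<dots> = \<eta>^(2*l0)" by (simp add: power_mult power_one_over mult.commute)
    also have "\<dots> = \<eta>^(2*l0) * (\<Prod>l\<in>{1..L}. h l0 l (X l))" using prod1 by simp
    also have "\<dots> \<le> (\<Sum>l0=1..L. \<eta>^(2*l0) * (\<Prod>l\<in>{1..L}. h l0 l (X l)))"
      using l0 eta by (intro member_le_sum) (auto intro!: mult_nonneg_nonneg prod_nonneg simp: h_def)
    finally show ?thesis using False eqiff by auto
  qed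
  have Eh: "measure_pmf.expectation B (\<lambda>X. \<Prod>l\<in>{1..L}. h l0 l (X l)) = p^(l0 - 1) * (1 - p)"
    if l0: "l0 \<in> {1..L}" for l0
  proof -
    have "measure_pmf.expectation B (\<lambda>X. \<Prod>l\<in>{1..L}. h l0 l (X l))
        = (\<Prod>l\<in>{1..L}. measure_pmf.expectation (bernoulli_pmf p) (h l0 l))"
      unfolding B_def by (rule expectation_prod_Pi_pmf) (auto intro: integrable_measure_pmf_finite simp: h_def)
    also have "\<dots> = (\<Prod>l\<in>{1..L}. if l < l0 then p else if l = l0 then 1 - p else 1)"
      using p0 p1 by (intro prod.cong refl) (auto simp: h_def)
    also have "\<dots> = (\<Prod>l\<in>{1..<l0} \<union> ({l0} \<union> {l0<..L}). if l < l0 then p else if l = l0 then 1 - p else 1)"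
      using l0 by (intro prod.cong refl) auto
    also have "\<dots> = (\<Prod>l\<in>{1..<l0}. if l < l0 then p else if l = l0 then 1 - p else 1) *
        ((\<Prod>l\<in>{l0}. if l < l0 then p else if l = l0 then 1 - p else 1) *
        (\<Prod>l\<in>{l0<..L}. if l < l0 then p else if l = l0 then 1 - p else 1))"
      by (subst prod.union_disjoint, simp, simp, force)+ simp
    also have "\<dots> = p^(l0 - 1) * (1 - p)"
      by simp
    finally show ?thesis .
  qed
  have "measure_pmf.expectation (pi_dist \<eta> L) (\<lambda>x. if x = ms then 0 else 1 / (ms - x)^2)
      = measure_pmf.expectation B (\<lambda>X. if g X = ms then 0 else 1 / (ms - g X)^2)"
    unfolding pi_eq by simp
  also have "\<dots> \<le> measure_pmf.expectation B (\<lambda>X. \<Sum>l0=1..L. \<eta>^(2*l0) * (\<Prod>l\<in>{1..L}. h l0 l (X l)))"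
    by (intro integral_mono intB pw)
  also have "\<dots> = (\<Sum>l0=1..L. \<eta>^(2*l0) * measure_pmf.expectation B (\<lambda>X. \<Prod>l\<in>{1..L}. h l0 l (X l)))"
    by (subst Bochner_Integration.integral_sum) (auto intro: intB)
  also have "\<dots> = (\<Sum>l0=1..L. \<eta>^(2*l0) * (p^(l0 - 1) * (1 - p)))"
    by (intro sum.cong refl arg_cong2[where f="(*)"] Eh) auto
  also have "\<dots> \<le> (\<Sum>l0=1..L. \<eta>^2)"
  proof (intro sum_mono)
    fix l0 assume l0: "l0 \<in> {1..L}"
    have "\<eta>^(2*l0) * p^(l0 - 1) = \<eta>^2"
    proof -
      have "\<eta>^(2*l0) = \<eta>^2 * (\<eta>^2)^(l0-1)" using l0
        by (metis One_nat_def Suc_le_eq atLeastAtMost_iff power_Suc less_imp_Suc_add add_diff_cancel_left' plus_1_eq_Suc power_mult)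
      then show ?thesis using eta by (simp add: p_def power_one_over field_simps)
    qed
    then have "\<eta>^(2*l0) * (p^(l0 - 1) * (1 - p)) = \<eta>^2 * (1 - p)" by (simp add: mult.assoc[symmetric])
    also have "\<dots> \<le> \<eta>^2" using p0 eta by (simp add: mult_le_cancel_left1)
    finally show "\<eta>^(2*l0) * (p^(l0 - 1) * (1 - p)) \<le> \<eta>^2" .
  qed
  also have "\<dots> = real L * \<eta>^2" by simp
  finally show "measure_pmf.expectation (pi_dist \<eta> L) (\<lambda>x. if x = ms then 0 else 1 / (ms - x)^2) \<le> real L * \<eta>^2" .
qed



theorem lemma5:
  fixes n R L :: nat and \<eta> :: real
  assumes "1 \<le> R" and "real R \<le> ln (real n) / (24 * ln (ln (real n)))"
    and "L = 6 * R" and "\<eta> = real n powr (1 / (2 * real L))"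
  shows "measure_pmf.expectation (cond_pmf (mus_dist n \<eta> L) (E0 n \<eta> L)) (H n \<eta> L)
           \<le> \<eta> ^ (2 + 2 * L) * real L"
proof -
  have n2: "n \<ge> 2"
  proof (rule ccontr)
    assume "\<not> n \<ge> 2" then have "n = 0 \<or> n = 1" by auto
    then have "ln (real n) = 0" by auto
    then show False using assms(1,2) by simp
  qed
  have L1: "L \<ge> 1" using assms(1,3) by simp
  have eta1: "\<eta> > 1" unfolding assms(4) using n2 L1 by (intro gr_one_powr) auto
  have etaL: "\<eta>^(2*L) = real n"
  proof -
    have "\<eta>^(2*L) = \<eta> powr (real (2*L))" using eta1 powr_realpow[of \<eta> "2*L"] by simp
    also have "\<dots> = real n powr (1/(2*real L) * real (2*L))" unfolding assms(4) by (simp add: powr_powr)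
    also have "1/(2*real L) * real (2*L) = 1" using L1 by simp
    finally show ?thesis using n2 by simp
  qed
  have Qv: "(1/\<eta>^2)^L = 1 / real n" using etaL by (simp add: power_one_over power_mult)
  note F = pi_facts[OF eta1 L1]
  have Q0: "0 < 1 / real n" and Q1: "1 / real n < 1" using n2 by auto
  have eq: "H n \<eta> L = (\<lambda>\<mu>. let istar = (THE i. i < n \<and> \<mu> i = mu_star \<eta> L) in
      (\<Sum>i\<in>{..<n} - {istar}. 1 / (mu_star \<eta> L - \<mu> i)^2))"
    by (rule ext) (simp only: H_def)
  define e where "e = measure_pmf.expectation (pi_dist \<eta> L)
      (\<lambda>x. if x = mu_star \<eta> L then 0 else 1 / (mu_star \<eta> L - x)^2)"
  have "measure_pmf.expectation (cond_pmf (mus_dist n \<eta> L) (E0 n \<eta> L)) (H n \<eta> L)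
      = (real n - 1) * e / (1 - 1 / real n)"
    unfolding mus_dist_def E0_def eq e_def
    using generic[of "pi_dist \<eta> L" "mu_star \<eta> L" n] F(1) F(2) Qv Q0 Q1 n2 by simp
  also have "\<dots> = real n * e" using n2 by (simp add: field_simps)
  also have "\<dots> \<le> real n * (real L * \<eta>^2)" using F(3) n2 unfolding e_def by simp
  also have "\<dots> = \<eta> ^ (2 + 2 * L) * real L" unfolding etaL[symmetric] by (simp add: power_add power2_eq_square)
  finally show ?thesis .
qed

end
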